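(* Consider a $d$-regular simple graph ($d\ge3$) on $B$ bonds, with arbitrary bond lengths, quantised with unitary vertex scattering matrices that prohibit back-scattering (all diagonal entries of every $\sigma_v$ are zero). Let $T$ be a positive integer, $\kappa>0$, and $f\in\mathbb{C}^{2B}$ with $|f_b|\le\kappa$ for $b=1,\dots,2B$. Then for all $t=1,2,\dots,T$, $$\big|\langle f,\tilde M^{(t)}f\rangle_{\mathbb{C}^{2B}}-\langle f,M^tf\rangle_{\mathbb{C}^{2B}}\big|\le\frac{2\kappa^2}{(d-2)(d-1)}(d-1)^t\,|\mathcal{C}_{B,2T}|.$$
   Context: A graph is simple if it has no loops or multiple edges. Each bond of length $L_b>0$ gives two directed bonds of equal length; $o(b),t(b)$ denote origin and terminus of directed bond $b$. Each vertex $v$ carries a unitary $d\times d$ matrix $\sigma_v$ indexed by the bonds at $v$; the bond scattering matrix $S$ ($2B\times2B$) has $S_{bc}=0$ unless $t(b)=o(c)$, and otherwise equals the entry of $\sigma_{t(b)}$ in the row of the bond underlying $c$ and column of the bond underlying $b$. $U(k)_{bc}=e^{ikL_b}S_{bc}$. $M$ is the $2B\times2B$ matrix $M_{bc}=|S_{bc}|^2$. $\tilde M^{(t)}_{bc}=\lim_{K\to\infty}\frac1K\int_0^K|(U(k)^t)_{bc}|^2\,dk$. $\langle x,y\rangle=\sum_i\bar x_iy_i$. A cycle is a closed path without back-tracking; $\mathcal{C}_{B,t}$ is the set of bonds lying on a cycle of length at most $t$. *)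

theory Defs
  imports "HOL-Analysis.Analysis"
begin

text \<open>A simple graph: finite vertex set V, symmetric irreflexive adjacency E on V.
  Bonds are the undirected edges {u,v}; directed bonds are pairs (u,v) with E u v,
  origin u, terminus v.\<close>

definition simple_graph :: "'v set \<Rightarrow> ('v \<Rightarrow> 'v \<Rightarrow> bool) \<Rightarrow> bool" where
  "simple_graph V E \<longleftrightarrow> finite V \<and> (\<forall>u w. E u w \<longrightarrow> u \<in> V \<and> w \<in> V)
     \<and> (\<forall>u w. E u w \<longrightarrow> E w u) \<and> (\<forall>u. \<not> E u u)"

definition nbrs :: "'v set \<Rightarrow> ('v \<Rightarrow> 'v \<Rightarrow> bool) \<Rightarrow> 'v \<Rightarrow> 'v set" where
  "nbrs V E v = {w \<in> V. E v w}"

definition regular :: "'v set \<Rightarrow> ('v \<Rightarrow> 'v \<Rightarrow> bool) \<Rightarrow> nat \<Rightarrow> bool" where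
  "regular V E d \<longleftrightarrow> (\<forall>v\<in>V. card (nbrs V E v) = d)"

definition dbonds :: "'v set \<Rightarrow> ('v \<Rightarrow> 'v \<Rightarrow> bool) \<Rightarrow> ('v \<times> 'v) set" where
  "dbonds V E = {(u, w). u \<in> V \<and> w \<in> V \<and> E u w}"

definition bond_lengths :: "'v set \<Rightarrow> ('v \<Rightarrow> 'v \<Rightarrow> bool) \<Rightarrow> ('v \<times> 'v \<Rightarrow> real) \<Rightarrow> bool" where
  "bond_lengths V E L \<longleftrightarrow> (\<forall>(u, w) \<in> dbonds V E. L (u, w) > 0 \<and> L (w, u) = L (u, w))"

definition unitary_on :: "'v set \<Rightarrow> ('v \<Rightarrow> 'v \<Rightarrow> complex) \<Rightarrow> bool" where
  "unitary_on N U \<longleftrightarrow>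
     (\<forall>a\<in>N. \<forall>b\<in>N. (\<Sum>w\<in>N. U a w * cnj (U b w)) = (if a = b then 1 else 0))"

text \<open>The vertex matrix sigma v is indexed by the bonds at v, which (simple graph)
  correspond to the neighbours of v: sigma v w u is the entry in the row of
  bond {v,w} and column of bond {v,u}.\<close>
definition Smat :: "('v \<Rightarrow> 'v \<Rightarrow> 'v \<Rightarrow> complex) \<Rightarrow> 'v \<times> 'v \<Rightarrow> 'v \<times> 'v \<Rightarrow> complex" where
  "Smat \<sigma> b c = (if snd b = fst c then \<sigma> (snd b) (snd c) (fst b) else 0)"

definition Umat :: "('v \<times> 'v \<Rightarrow> real) \<Rightarrow> ('v \<Rightarrow> 'v \<Rightarrow> 'v \<Rightarrow> complex) \<Rightarrow> real
    \<Rightarrow> 'v \<times> 'v \<Rightarrow> 'v \<times> 'v \<Rightarrow> complex" where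
  "Umat L \<sigma> k b c = exp (\<i> * complex_of_real (k * L b)) * Smat \<sigma> b c"

definition Mmat :: "('v \<Rightarrow> 'v \<Rightarrow> 'v \<Rightarrow> complex) \<Rightarrow> 'v \<times> 'v \<Rightarrow> 'v \<times> 'v \<Rightarrow> real" where
  "Mmat \<sigma> b c = (cmod (Smat \<sigma> b c))\<^sup>2"

primrec mat_pow :: "'a set \<Rightarrow> ('a \<Rightarrow> 'a \<Rightarrow> 'b::semiring_1) \<Rightarrow> nat \<Rightarrow> 'a \<Rightarrow> 'a \<Rightarrow> 'b" where
  "mat_pow D A 0 = (\<lambda>b c. if b = c then 1 else 0)"
| "mat_pow D A (Suc n) = (\<lambda>b c. \<Sum>x\<in>D. mat_pow D A n b x * A x c)"

definition Mtilde :: "('v \<times> 'v) set \<Rightarrow> ('v \<times> 'v \<Rightarrow> real) \<Rightarrow> ('v \<Rightarrow> 'v \<Rightarrow> 'v \<Rightarrow> complex)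
    \<Rightarrow> nat \<Rightarrow> 'v \<times> 'v \<Rightarrow> 'v \<times> 'v \<Rightarrow> real" where
  "Mtilde D L \<sigma> t b c =
     Lim at_top (\<lambda>K. (1 / K) * integral {0..K}
        (\<lambda>k. (cmod (mat_pow D (Umat L \<sigma> k) t b c))\<^sup>2))"

definition bond_inner :: "'a set \<Rightarrow> ('a \<Rightarrow> complex) \<Rightarrow> ('a \<Rightarrow> 'a \<Rightarrow> complex) \<Rightarrow> ('a \<Rightarrow> complex) \<Rightarrow> complex" where
  "bond_inner D x A y = (\<Sum>b\<in>D. cnj (x b) * (\<Sum>c\<in>D. A b c * y c))"

text \<open>A cycle of length l: closed path p 0, ..., p l = p 0 along bonds, without
  back-tracking (also across the closing point, read cyclically).\<close>
definition is_cycle :: "'v set \<Rightarrow> ('v \<Rightarrow> 'v \<Rightarrow> bool) \<Rightarrow> nat \<Rightarrow> (nat \<Rightarrow> 'v) \<Rightarrow> bool" where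
  "is_cycle V E l p \<longleftrightarrow> l \<ge> 1 \<and> p l = p 0 \<and> (\<forall>i\<le>l. p i \<in> V)
     \<and> (\<forall>i<l. E (p i) (p (Suc i)))
     \<and> (\<forall>i. p ((i + 2) mod l) \<noteq> p (i mod l))"

definition cycle_bonds :: "'v set \<Rightarrow> ('v \<Rightarrow> 'v \<Rightarrow> bool) \<Rightarrow> nat \<Rightarrow> 'v set set" where
  "cycle_bonds V E t = {{u, w} | u w. E u w \<and>
     (\<exists>l p. l \<le> t \<and> is_cycle V E l p \<and> (\<exists>i<l. {p i, p (Suc i)} = {u, w}))}"

end

theory Submission
  imports Defs
begin



definition ee :: "real \<Rightarrow> complex" where "ee x = exp (\<i> * complex_of_real x)"

definition Iw :: "real \<Rightarrow> real \<Rightarrow> complex" where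
  "Iw w K = (if w = 0 then complex_of_real K else (ee (K * w) - 1) / (\<i> * complex_of_real w))"

lemma exp_deriv:
  assumes "w \<noteq> 0"
  shows "((\<lambda>k::real. ee (k * w) / (\<i> * complex_of_real w)) has_vector_derivative
      (ee (x * w))) (at x within S)"
proof -
  have "((\<lambda>z. exp (\<i> * (z * complex_of_real w)) / (\<i> * complex_of_real w)) has_field_derivative
      (exp (\<i> * (of_real x * complex_of_real w)))) (at (of_real x))"
    using assms by (auto intro!: derivative_eq_intros simp: field_simps)
  from has_vector_derivative_real_field[OF this, of S] show ?thesis
    by (simp add: ee_def)
qed

lemma ee_integral:
  assumes "0 \<le> K"
  shows "((\<lambda>k. ee (k * w)) has_integral Iw w K) {0..K}"
proof (cases "w = 0")
  case True
  then show ?thesis using has_integral_const_real[of "1::complex" 0 K] assms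
    by (simp add: Iw_def ee_def content_real scaleR_conv_of_real)
next
  case False
  have "((\<lambda>k. ee (k * w)) has_integral (ee (K * w) / (\<i> * complex_of_real w) - ee (0 * w) / (\<i> * complex_of_real w))) {0..K}"
    by (rule fundamental_theorem_of_calculus[OF assms exp_deriv[OF False]])
  then show ?thesis using False by (simp add: Iw_def ee_def diff_divide_distrib)
qed

lemma Iw_avg: "((\<lambda>K. Iw w K / complex_of_real K) \<longlongrightarrow> (if w = 0 then 1 else 0)) at_top"
proof (cases "w = 0")
  case True
  have "\<forall>\<^sub>F K in at_top. Iw w K / complex_of_real K = 1"
    using eventually_gt_at_top[of "0::real"] by eventually_elim (simp add: Iw_def True)
  then show ?thesis using True by (simp add: tendsto_eventually)
next
  case False
  have lim: "((\<lambda>K::real. 2 / \<bar>w\<bar> * inverse K) \<longlongrightarrow> 0) at_top"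
    using tendsto_mult_right_zero[OF tendsto_inverse_0_at_top[OF filterlim_ident], of "2 / \<bar>w\<bar>"] by simp
  have "\<forall>\<^sub>F K in at_top. norm (Iw w K / complex_of_real K) \<le> 2 / \<bar>w\<bar> * inverse K"
    using eventually_gt_at_top[of "0::real"]
  proof eventually_elim
    case (elim K)
    have n1: "norm (ee (K * w)) = 1" by (simp add: ee_def)
    have "norm (ee (K * w) - 1) \<le> 2"
      using norm_triangle_ineq4[of "ee (K * w)" 1] n1 by simp
    moreover have "norm (Iw w K / complex_of_real K) = norm (ee (K * w) - 1) / (\<bar>w\<bar> * K)"
      using False elim by (simp add: Iw_def norm_divide norm_mult)
    ultimately show ?case using elim False
      by (simp add: divide_right_mono field_simps)
  qed
  then have "((\<lambda>K. Iw w K / complex_of_real K) \<longlongrightarrow> 0) at_top"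
    by (rule Lim_null_comparison[OF _ lim])
  then show ?thesis using False by simp
qed

lemma ee_mult: "ee a * ee b = ee (a + b)"
  by (simp add: ee_def exp_add[symmetric] distrib_left)
lemma ee_cnj: "cnj (ee a) = ee (- a)"
  by (simp add: ee_def exp_cnj)

lemma trig_sq:
  assumes "finite I"
  shows "complex_of_real ((cmod (\<Sum>p\<in>I. \<alpha> p * ee (k * lf p)))\<^sup>2)
     = (\<Sum>p\<in>I. \<Sum>q\<in>I. \<alpha> p * cnj (\<alpha> q) * ee (k * (lf p - lf q)))"
proof -
  have "complex_of_real ((cmod (\<Sum>p\<in>I. \<alpha> p * ee (k * lf p)))\<^sup>2)
     = (\<Sum>p\<in>I. \<alpha> p * ee (k * lf p)) * (\<Sum>q\<in>I. cnj (\<alpha> q) * ee (- (k * lf q)))"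
    unfolding complex_norm_square by (simp add: ee_cnj)
  also have "\<dots> = (\<Sum>p\<in>I. \<Sum>q\<in>I. (\<alpha> p * ee (k * lf p)) * (cnj (\<alpha> q) * ee (- (k * lf q))))"
    by (rule sum_product)
  also have "\<dots> = (\<Sum>p\<in>I. \<Sum>q\<in>I. \<alpha> p * cnj (\<alpha> q) * ee (k * (lf p - lf q)))"
    by (intro sum.cong refl) (simp add: ee_mult right_diff_distrib mult_ac)
  finally show ?thesis .
qed

lemma trig_integral:
  assumes "finite I" "0 \<le> K"
  shows "((\<lambda>k. (cmod (\<Sum>p\<in>I. \<alpha> p * ee (k * lf p)))\<^sup>2) has_integral
           Re (\<Sum>p\<in>I. \<Sum>q\<in>I. \<alpha> p * cnj (\<alpha> q) * Iw (lf p - lf q) K)) {0..K}"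
proof -
  have "((\<lambda>k. \<Sum>p\<in>I. \<Sum>q\<in>I. \<alpha> p * cnj (\<alpha> q) * ee (k * (lf p - lf q))) has_integral
           (\<Sum>p\<in>I. \<Sum>q\<in>I. \<alpha> p * cnj (\<alpha> q) * Iw (lf p - lf q) K)) {0..K}"
    using assms by (intro has_integral_sum has_integral_mult_right ee_integral) auto
  then have "((\<lambda>k. complex_of_real ((cmod (\<Sum>p\<in>I. \<alpha> p * ee (k * lf p)))\<^sup>2)) has_integral
           (\<Sum>p\<in>I. \<Sum>q\<in>I. \<alpha> p * cnj (\<alpha> q) * Iw (lf p - lf q) K)) {0..K}"
    unfolding trig_sq[OF assms(1), symmetric] .
  from has_integral_linear[OF this bounded_linear_Re] show ?thesis
    by (simp add: o_def del: of_real_power)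
qed

lemma trig_avg:
  assumes "finite I"
  shows "((\<lambda>K. (1/K) * integral {0..K} (\<lambda>k. (cmod (\<Sum>p\<in>I. \<alpha> p * ee (k * lf p)))\<^sup>2))
     \<longlongrightarrow> Re (\<Sum>p\<in>I. \<Sum>q\<in>I. if lf p = lf q then \<alpha> p * cnj (\<alpha> q) else 0)) at_top"
proof -
  have lim: "((\<lambda>K. \<Sum>p\<in>I. \<Sum>q\<in>I. \<alpha> p * cnj (\<alpha> q) * (Iw (lf p - lf q) K / complex_of_real K))
     \<longlongrightarrow> (\<Sum>p\<in>I. \<Sum>q\<in>I. \<alpha> p * cnj (\<alpha> q) * (if lf p - lf q = 0 then 1 else 0))) at_top"
    by (intro tendsto_sum tendsto_mult_left Iw_avg)
  have eq: "(\<Sum>p\<in>I. \<Sum>q\<in>I. \<alpha> p * cnj (\<alpha> q) * (if lf p - lf q = 0 then 1 else 0))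
      = (\<Sum>p\<in>I. \<Sum>q\<in>I. if lf p = lf q then \<alpha> p * cnj (\<alpha> q) else 0)"
    by (intro sum.cong refl) auto
  have "\<forall>\<^sub>F K in at_top. Re (\<Sum>p\<in>I. \<Sum>q\<in>I. \<alpha> p * cnj (\<alpha> q) * (Iw (lf p - lf q) K / complex_of_real K))
     = (1/K) * integral {0..K} (\<lambda>k. (cmod (\<Sum>p\<in>I. \<alpha> p * ee (k * lf p)))\<^sup>2)"
    using eventually_gt_at_top[of "0::real"]
  proof eventually_elim
    case (elim K)
    have "integral {0..K} (\<lambda>k. (cmod (\<Sum>p\<in>I. \<alpha> p * ee (k * lf p)))\<^sup>2)
       = Re (\<Sum>p\<in>I. \<Sum>q\<in>I. \<alpha> p * cnj (\<alpha> q) * Iw (lf p - lf q) K)"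
      using trig_integral[OF assms, of K] elim by (simp add: integral_unique)
    moreover have "(\<Sum>p\<in>I. \<Sum>q\<in>I. \<alpha> p * cnj (\<alpha> q) * (Iw (lf p - lf q) K / complex_of_real K))
       = (\<Sum>p\<in>I. \<Sum>q\<in>I. \<alpha> p * cnj (\<alpha> q) * Iw (lf p - lf q) K) / complex_of_real K"
      by (simp add: sum_divide_distrib)
    ultimately show ?case by (simp add: Re_divide_of_real)
  qed
  from tendsto_cong[THEN iffD1, OF this tendsto_Re[OF lim]] show ?thesis
    by (simp only: eq)
qed



definition W :: "'a set \<Rightarrow> nat \<Rightarrow> 'a \<Rightarrow> 'a \<Rightarrow> (nat \<Rightarrow> 'a) set" where
  "W D n b c = {p \<in> {..n} \<rightarrow>\<^sub>E D. p 0 = b \<and> p n = c}"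

lemma finite_W: "finite D \<Longrightarrow> finite (W D n b c)"
  unfolding W_def by (rule finite_subset[of _ "{..n} \<rightarrow>\<^sub>E D"]) (auto intro: finite_PiE)

lemma W0: "b \<in> D \<Longrightarrow> W D 0 b c = (if b = c then {(\<lambda>i. if i = 0 then b else undefined)} else {})"
  unfolding W_def by (auto simp: PiE_def extensional_def fun_eq_iff)

lemma mat_pow_walks:
  fixes A :: "'a \<Rightarrow> 'a \<Rightarrow> 'b::comm_semiring_1"
  assumes "finite D" "b \<in> D" "c \<in> D"
  shows "mat_pow D A n b c = (\<Sum>p\<in>W D n b c. \<Prod>i<n. A (p i) (p (Suc i)))"
  using assms(3)
proof (induction n arbitrary: c)
  case 0
  then show ?case using assms by (simp add: W0)
next
  case (Suc n)
  have "mat_pow D A (Suc n) b c = (\<Sum>x\<in>D. (\<Sum>p\<in>W D n b x. \<Prod>i<n. A (p i) (p (Suc i))) * A x c)"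
    using Suc by simp
  also have "\<dots> = (\<Sum>(x,q)\<in>Sigma D (W D n b). (\<Prod>i<n. A (q i) (q (Suc i))) * A x c)"
    unfolding sum_distrib_right by (rule sum.Sigma) (auto simp: assms finite_W)
  also have "\<dots> = (\<Sum>p\<in>W D (Suc n) b c. \<Prod>i<Suc n. A (p i) (p (Suc i)))"
  proof (rule sum.reindex_bij_witness[where i = "\<lambda>p. (p n, restrict p {..n})" and j = "\<lambda>(x,q). q(Suc n := c)"])
    fix a assume a: "a \<in> Sigma D (W D n b)"
    then show "(\<lambda>p. (p n, restrict p {..n})) ((\<lambda>(x, q). q(Suc n := c)) a) = a"
      by (auto simp: W_def PiE_def extensional_def fun_eq_iff)
    show "(\<lambda>(x, q). q(Suc n := c)) a \<in> W D (Suc n) b c"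
      using a Suc.prems by (auto simp: W_def PiE_def extensional_def Pi_def le_Suc_eq)
    show "(\<Prod>i<Suc n. A (((\<lambda>(x, q). q(Suc n := c)) a) i) (((\<lambda>(x, q). q(Suc n := c)) a) (Suc i))) =
       (case a of (x, q) \<Rightarrow> (\<Prod>i<n. A (q i) (q (Suc i))) * A x c)"
      using a by (auto simp: W_def)
  next
    fix p assume p: "p \<in> W D (Suc n) b c"
    then show "(\<lambda>(x, q). q(Suc n := c)) (p n, restrict p {..n}) = p"
      by (auto simp: W_def PiE_def extensional_def fun_eq_iff)
    show "(p n, restrict p {..n}) \<in> Sigma D (W D n b)"
      using p by (auto simp: W_def PiE_def extensional_def)
  qed
  finally show ?case .
qed


lemma finite_dbonds: "simple_graph V E \<Longrightarrow> finite (dbonds V E)"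
  unfolding simple_graph_def dbonds_def
  by (rule finite_subset[of _ "V \<times> V"]) auto

lemma in_dbonds: "x \<in> dbonds V E \<longleftrightarrow> fst x \<in> V \<and> snd x \<in> V \<and> E (fst x) (snd x)"
  by (cases x) (auto simp: dbonds_def)

lemma into_v: "simple_graph V E \<Longrightarrow> v \<in> V \<Longrightarrow> {x \<in> dbonds V E. snd x = v} = (\<lambda>u. (u, v)) ` nbrs V E v"
  by (auto simp: simple_graph_def dbonds_def nbrs_def image_def)

lemma S_col:
  assumes G: "simple_graph V E" and U: "\<forall>v\<in>V. unitary_on (nbrs V E v) (\<sigma> v)"
    and c: "c \<in> dbonds V E" and c': "c' \<in> dbonds V E"
  shows "(\<Sum>x\<in>dbonds V E. cnj (Smat \<sigma> x c) * Smat \<sigma> x c') = (if c = c' then 1 else 0)"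
proof -
  obtain v w where cv: "c = (v, w)" by (cases c)
  obtain v' w' where cv': "c' = (v', w')" by (cases c')
  show ?thesis
  proof (cases "v = v'")
    case False
    then show ?thesis by (auto simp: Smat_def cv cv' intro!: sum.neutral)
  next
    case True
    have vV: "v \<in> V" and ww: "w \<in> nbrs V E v" "w' \<in> nbrs V E v"
      using c c' True by (auto simp: cv cv' dbonds_def nbrs_def)
    have "(\<Sum>x\<in>dbonds V E. cnj (Smat \<sigma> x c) * Smat \<sigma> x c')
        = (\<Sum>x\<in>dbonds V E. if snd x = v then cnj (\<sigma> v w (fst x)) * \<sigma> v w' (fst x) else 0)"
      by (intro sum.cong refl) (auto simp: Smat_def cv cv' True)
    also have "\<dots> = (\<Sum>x\<in>{x \<in> dbonds V E. snd x = v}. cnj (\<sigma> v w (fst x)) * \<sigma> v w' (fst x))"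
      by (simp add: sum.inter_filter[symmetric] finite_dbonds[OF G])
    also have "\<dots> = (\<Sum>u\<in>nbrs V E v. cnj (\<sigma> v w u) * \<sigma> v w' u)"
      unfolding into_v[OF G vV] by (subst sum.reindex) (auto simp: inj_on_def)
    also have "\<dots> = cnj (\<Sum>u\<in>nbrs V E v. \<sigma> v w u * cnj (\<sigma> v w' u))"
      by (simp add: mult.commute)
    also have "\<dots> = (if w = w' then 1 else 0)"
      using U vV ww unfolding unitary_on_def by auto
    finally show ?thesis by (simp add: cv cv' True)
  qed
qed

lemma U_col:
  assumes G: "simple_graph V E" and U: "\<forall>v\<in>V. unitary_on (nbrs V E v) (\<sigma> v)"
    and c: "c \<in> dbonds V E" and c': "c' \<in> dbonds V E"
  shows "(\<Sum>x\<in>dbonds V E. cnj (Umat L \<sigma> k x c) * Umat L \<sigma> k x c') = (if c = c' then 1 else 0)"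
proof -
  have e: "exp (\<i> * (complex_of_real a * complex_of_real r)) * cnj (exp (\<i> * (complex_of_real a * complex_of_real r))) = 1" for a r
    by (simp add: exp_cnj exp_add[symmetric])
  have "(\<Sum>x\<in>dbonds V E. cnj (Umat L \<sigma> k x c) * Umat L \<sigma> k x c')
     = (\<Sum>x\<in>dbonds V E. cnj (Smat \<sigma> x c) * Smat \<sigma> x c')"
    by (intro sum.cong refl) (simp add: Umat_def mult_ac e)
  then show ?thesis using S_col[OF assms] by simp
qed

lemma Upow_col:
  assumes G: "simple_graph V E" and U: "\<forall>v\<in>V. unitary_on (nbrs V E v) (\<sigma> v)"
    and c: "c \<in> dbonds V E" and c': "c' \<in> dbonds V E"
  shows "(\<Sum>b\<in>dbonds V E. cnj (mat_pow (dbonds V E) (Umat L \<sigma> k) n b c) * mat_pow (dbonds V E) (Umat L \<sigma> k) n b c')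
     = (if c = c' then 1 else 0)"
  using c c'
proof (induction n arbitrary: c c')
  case 0
  have "\<And>b. cnj (if b = c then 1 else 0) * (if b = c' then 1 else 0) = (if b = c then (if c = c' then 1 else 0) else (0::complex))"
    by auto
  then show ?case using 0 by (simp add: finite_dbonds[OF G])
next
  case (Suc n)
  define D where "D = dbonds V E"
  define P where "P = mat_pow D (Umat L \<sigma> k) n"
  define A where "A = Umat L \<sigma> k"
  have fD: "finite D" using finite_dbonds[OF G] by (simp add: D_def)
  have "(\<Sum>b\<in>D. cnj (\<Sum>x\<in>D. P b x * A x c) * (\<Sum>y\<in>D. P b y * A y c'))
     = (\<Sum>b\<in>D. \<Sum>x\<in>D. \<Sum>y\<in>D. cnj (A x c) * A y c' * (cnj (P b x) * P b y))"
    unfolding cnj_sum sum_product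
    by (intro sum.cong refl) (simp add: mult_ac)
  also have "\<dots> = (\<Sum>x\<in>D. \<Sum>y\<in>D. cnj (A x c) * A y c' * (\<Sum>b\<in>D. cnj (P b x) * P b y))"
  proof -
    have "(\<Sum>b\<in>D. \<Sum>x\<in>D. \<Sum>y\<in>D. cnj (A x c) * A y c' * (cnj (P b x) * P b y))
       = (\<Sum>x\<in>D. \<Sum>b\<in>D. \<Sum>y\<in>D. cnj (A x c) * A y c' * (cnj (P b x) * P b y))"
      by (rule sum.swap)
    also have "\<dots> = (\<Sum>x\<in>D. \<Sum>y\<in>D. \<Sum>b\<in>D. cnj (A x c) * A y c' * (cnj (P b x) * P b y))"
      by (intro sum.cong refl sum.swap)
    finally show ?thesis by (simp add: sum_distrib_left)
  qed
  also have "\<dots> = (\<Sum>x\<in>D. \<Sum>y\<in>D. cnj (A x c) * A y c' * (if x = y then 1 else 0))"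
    using Suc.IH by (simp add: P_def D_def)
  also have "\<dots> = (\<Sum>x\<in>D. cnj (A x c) * A x c')"
    by (simp add: fD if_distrib cong: if_cong)
  also have "\<dots> = (if c = c' then 1 else 0)"
    using U_col[OF G U Suc.prems] by (simp add: A_def D_def)
  finally show ?case by (simp add: P_def A_def D_def)
qed


definition amp :: "('v \<Rightarrow> 'v \<Rightarrow> 'v \<Rightarrow> complex) \<Rightarrow> nat \<Rightarrow> (nat \<Rightarrow> 'v \<times> 'v) \<Rightarrow> complex" where
  "amp \<sigma> n p = (\<Prod>i<n. Smat \<sigma> (p i) (p (Suc i)))"

definition wlen :: "('v \<times> 'v \<Rightarrow> real) \<Rightarrow> nat \<Rightarrow> (nat \<Rightarrow> 'v \<times> 'v) \<Rightarrow> real" where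
  "wlen L n p = (\<Sum>i<n. L (p i))"

definition Hm :: "('v \<times> 'v) set \<Rightarrow> ('v \<times> 'v \<Rightarrow> real) \<Rightarrow> ('v \<Rightarrow> 'v \<Rightarrow> 'v \<Rightarrow> complex) \<Rightarrow> nat \<Rightarrow> 'v \<times> 'v \<Rightarrow> 'v \<times> 'v \<Rightarrow> complex" where
  "Hm D L \<sigma> n b c = (\<Sum>p\<in>W D n b c. \<Sum>q\<in>W D n b c. if wlen L n p = wlen L n q then amp \<sigma> n p * cnj (amp \<sigma> n q) else 0)"

lemma Upow_expand:
  assumes "finite D" "b \<in> D" "c \<in> D"
  shows "mat_pow D (Umat L \<sigma> k) n b c = (\<Sum>p\<in>W D n b c. amp \<sigma> n p * ee (k * wlen L n p))"
proof -
  have "(\<Prod>i<n. Umat L \<sigma> k (p i) (p (Suc i))) = amp \<sigma> n p * ee (k * wlen L n p)" for p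
  proof -
    have "(\<Prod>i<n. Umat L \<sigma> k (p i) (p (Suc i))) = (\<Prod>i<n. exp (\<i> * complex_of_real (k * L (p i)))) * amp \<sigma> n p"
      by (simp add: Umat_def amp_def prod.distrib)
    also have "(\<Prod>i<n. exp (\<i> * complex_of_real (k * L (p i)))) = exp (\<Sum>i<n. \<i> * complex_of_real (k * L (p i)))"
      by (simp add: exp_sum)
    also have "(\<Sum>i<n. \<i> * complex_of_real (k * L (p i))) = \<i> * complex_of_real (k * wlen L n p)"
      by (simp add: wlen_def sum_distrib_left)
    finally show ?thesis by (simp add: ee_def mult.commute)
  qed
  then show ?thesis using mat_pow_walks[OF assms, where A="Umat L \<sigma> k" and n=n] by simp
qed

lemma Mtilde_lim:
  assumes "finite D" "b \<in> D" "c \<in> D"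
  shows "((\<lambda>K. (1/K) * integral {0..K} (\<lambda>k. (cmod (mat_pow D (Umat L \<sigma> k) n b c))\<^sup>2)) \<longlongrightarrow> Re (Hm D L \<sigma> n b c)) at_top"
  using trig_avg[OF finite_W[OF assms(1)], where \<alpha>="amp \<sigma> n" and lf="wlen L n"]
  by (simp add: Upow_expand[OF assms] Hm_def)

lemma Mtilde_eq:
  assumes "finite D" "b \<in> D" "c \<in> D"
  shows "Mtilde D L \<sigma> n b c = Re (Hm D L \<sigma> n b c)"
  unfolding Mtilde_def by (rule tendsto_Lim[OF _ Mtilde_lim[OF assms]]) simp

lemma Mtilde_nonneg:
  assumes "finite D" "b \<in> D" "c \<in> D"
  shows "0 \<le> Mtilde D L \<sigma> n b c"
proof -
  have "\<forall>\<^sub>F K in at_top. 0 \<le> (1/K) * integral {0..K} (\<lambda>k. (cmod (mat_pow D (Umat L \<sigma> k) n b c))\<^sup>2)"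
    using eventually_gt_at_top[of "0::real"]
  proof eventually_elim
    case (elim K)
    have "0 \<le> integral {0..K} (\<lambda>k. (cmod (mat_pow D (Umat L \<sigma> k) n b c))\<^sup>2)"
      unfolding Upow_expand[OF assms]
      by (rule has_integral_nonneg[OF integrable_integral[OF has_integral_integrable[OF trig_integral[OF finite_W[OF assms(1), of n b c], where K=K and \<alpha>="amp \<sigma> n" and lf="wlen L n"]]]]) (use elim in auto)
    then show ?case using elim by simp
  qed
  from tendsto_lowerbound[OF Mtilde_lim[OF assms] this] show ?thesis
    by (simp add: Mtilde_eq[OF assms])
qed

lemma Mtilde_colsum:
  assumes G: "simple_graph V E" and U: "\<forall>v\<in>V. unitary_on (nbrs V E v) (\<sigma> v)"
    and c: "c \<in> dbonds V E"
  shows "(\<Sum>b\<in>dbonds V E. Mtilde (dbonds V E) L \<sigma> n b c) = 1"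
proof -
  define D where "D = dbonds V E"
  have fD: "finite D" using finite_dbonds[OF G] by (simp add: D_def)
  have cD: "c \<in> D" using c by (simp add: D_def)
  define g where "g b k = (cmod (mat_pow D (Umat L \<sigma> k) n b c))\<^sup>2" for b k
  have lim: "((\<lambda>K. \<Sum>b\<in>D. (1/K) * integral {0..K} (g b)) \<longlongrightarrow> (\<Sum>b\<in>D. Mtilde D L \<sigma> n b c)) at_top"
  proof (intro tendsto_sum)
    fix b assume b: "b \<in> D"
    show "((\<lambda>K. (1/K) * integral {0..K} (g b)) \<longlongrightarrow> Mtilde D L \<sigma> n b c) at_top"
      using Mtilde_lim[OF fD b cD, of L \<sigma> n] Mtilde_eq[OF fD b cD, of L \<sigma> n] unfolding g_def by simp
  qed
  have one: "(\<Sum>b\<in>D. g b k) = 1" for k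
  proof -
    have "complex_of_real (\<Sum>b\<in>D. g b k) = (\<Sum>b\<in>D. cnj (mat_pow D (Umat L \<sigma> k) n b c) * mat_pow D (Umat L \<sigma> k) n b c)"
      unfolding g_def of_real_sum by (intro sum.cong refl) (simp add: complex_norm_square mult.commute del: of_real_power)
    also have "\<dots> = 1" using Upow_col[OF G U c c] by (simp add: D_def)
    finally show ?thesis by (metis of_real_eq_1_iff)
  qed
  have "\<forall>\<^sub>F K in at_top. (\<Sum>b\<in>D. (1/K) * integral {0..K} (g b)) = 1"
    using eventually_gt_at_top[of "0::real"]
  proof eventually_elim
    case (elim K)
    have int: "(g b has_integral integral {0..K} (g b)) {0..K}" if "b \<in> D" for b
      unfolding g_def Upow_expand[OF fD that cD]
      by (rule integrable_integral[OF has_integral_integrable[OF trig_integral[OF finite_W[OF fD, of n b c], where K=K and \<alpha>="amp \<sigma> n" and lf="wlen L n"]]]) (use elim in auto)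
    have "((\<lambda>k. \<Sum>b\<in>D. g b k) has_integral (\<Sum>b\<in>D. integral {0..K} (g b))) {0..K}"
      by (rule has_integral_sum[OF fD int])
    then have "((\<lambda>k. 1) has_integral (\<Sum>b\<in>D. integral {0..K} (g b))) {0..K}"
      by (simp add: one)
    moreover have "((\<lambda>k. 1::real) has_integral K) {0..K}"
      using has_integral_const_real[of "1::real" 0 K] elim by (simp add: content_real)
    ultimately have "(\<Sum>b\<in>D. integral {0..K} (g b)) = K"
      using has_integral_unique by blast
    then show ?case using elim by (simp add: sum_divide_distrib[symmetric])
  qed
  then have "((\<lambda>K. \<Sum>b\<in>D. (1/K) * integral {0..K} (g b)) \<longlongrightarrow> 1) at_top"
    by (simp add: tendsto_eventually)
  from tendsto_unique[OF _ lim this] show ?thesis by (simp add: D_def)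
qed

lemma M_colsum1:
  assumes G: "simple_graph V E" and U: "\<forall>v\<in>V. unitary_on (nbrs V E v) (\<sigma> v)"
    and c: "c \<in> dbonds V E"
  shows "(\<Sum>x\<in>dbonds V E. Mmat \<sigma> x c) = 1"
proof -
  have "complex_of_real (\<Sum>x\<in>dbonds V E. Mmat \<sigma> x c) = (\<Sum>x\<in>dbonds V E. cnj (Smat \<sigma> x c) * Smat \<sigma> x c)"
    unfolding Mmat_def of_real_sum by (intro sum.cong refl) (simp add: complex_norm_square mult.commute del: of_real_power)
  also have "\<dots> = 1" using S_col[OF G U c c] by simp
  finally show ?thesis by (metis of_real_eq_1_iff)
qed

lemma Mpow_nonneg: "0 \<le> mat_pow D (Mmat \<sigma>) n b c"
  by (induction n arbitrary: c) (auto simp: Mmat_def intro!: sum_nonneg)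

lemma Mpow_colsum:
  assumes G: "simple_graph V E" and U: "\<forall>v\<in>V. unitary_on (nbrs V E v) (\<sigma> v)"
    and c: "c \<in> dbonds V E"
  shows "(\<Sum>b\<in>dbonds V E. mat_pow (dbonds V E) (Mmat \<sigma>) n b c) = 1"
  using c
proof (induction n arbitrary: c)
  case 0
  then show ?case by (simp add: finite_dbonds[OF G])
next
  case (Suc n)
  have "(\<Sum>b\<in>dbonds V E. mat_pow (dbonds V E) (Mmat \<sigma>) (Suc n) b c)
     = (\<Sum>x\<in>dbonds V E. (\<Sum>b\<in>dbonds V E. mat_pow (dbonds V E) (Mmat \<sigma>) n b x) * Mmat \<sigma> x c)"
    by (simp add: sum_distrib_right) (rule sum.swap)
  also have "\<dots> = (\<Sum>x\<in>dbonds V E. Mmat \<sigma> x c)"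
    using Suc.IH by simp
  also have "\<dots> = 1" by (rule M_colsum1[OF G U Suc.prems])
  finally show ?case .
qed

lemma good_col:
  assumes "finite D" "b \<in> D" "c \<in> D"
    and uniq: "\<forall>p\<in>W D n b c. \<forall>q\<in>W D n b c. p \<noteq> q \<longrightarrow> amp \<sigma> n p = 0 \<or> amp \<sigma> n q = 0"
  shows "Mtilde D L \<sigma> n b c = mat_pow D (Mmat \<sigma>) n b c"
proof -
  have "Hm D L \<sigma> n b c = (\<Sum>p\<in>W D n b c. amp \<sigma> n p * cnj (amp \<sigma> n p))"
    unfolding Hm_def
  proof (intro sum.cong refl)
    fix p assume p: "p \<in> W D n b c"
    have "(\<Sum>q\<in>W D n b c. if wlen L n p = wlen L n q then amp \<sigma> n p * cnj (amp \<sigma> n q) else 0)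
       = (\<Sum>q\<in>W D n b c. if q = p then amp \<sigma> n p * cnj (amp \<sigma> n p) else 0)"
      using uniq p by (intro sum.cong refl) auto
    also have "\<dots> = amp \<sigma> n p * cnj (amp \<sigma> n p)"
      using p finite_W[OF assms(1)] by simp
    finally show "(\<Sum>q\<in>W D n b c. if wlen L n p = wlen L n q then amp \<sigma> n p * cnj (amp \<sigma> n q) else 0) = amp \<sigma> n p * cnj (amp \<sigma> n p)" .
  qed
  then have "Re (Hm D L \<sigma> n b c) = (\<Sum>p\<in>W D n b c. (cmod (amp \<sigma> n p))\<^sup>2)"
    by (simp add: complex_norm_square[symmetric] del: of_real_power)
  also have "\<dots> = mat_pow D (Mmat \<sigma>) n b c"
    unfolding mat_pow_walks[OF assms(1-3)]
    by (simp add: Mmat_def amp_def prod_norm[symmetric] prod_power_distrib)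
  finally show ?thesis by (simp add: Mtilde_eq[OF assms(1-3)])
qed



primrec Fw :: "('v \<times> 'v) set \<Rightarrow> ('v \<times> 'v) \<Rightarrow> nat \<Rightarrow> ('v \<times> 'v) set" where
  "Fw D e 0 = {e}"
| "Fw D e (Suc n) = {c \<in> D. \<exists>c'\<in>Fw D e n. snd c' = fst c \<and> fst c' \<noteq> snd c}"

lemma Fw_sub: "e \<in> D \<Longrightarrow> Fw D e n \<subseteq> D"
  by (cases n) auto

lemma Fw_card:
  assumes G: "simple_graph V E" and R: "regular V E d" and e: "e \<in> dbonds V E"
  shows "card (Fw (dbonds V E) e n) \<le> (d - 1) ^ n"
proof (induction n)
  case 0
  then show ?case by simp
next
  case (Suc n)
  define D where "D = dbonds V E"
  define succ where "succ c' = {c \<in> D. snd c' = fst c \<and> fst c' \<noteq> snd c}" for c'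
  have fD: "finite D" using finite_dbonds[OF G] by (simp add: D_def)
  have eq: "Fw D e (Suc n) = (\<Union>c'\<in>Fw D e n. succ c')"
    by (auto simp: succ_def)
  have fin: "finite (Fw D e n)" using Fw_sub[of e D n] e fD by (auto simp: D_def intro: finite_subset)
  have cs: "card (succ c') \<le> d - 1" if c': "c' \<in> D" for c'
  proof -
    have nV: "snd c' \<in> V" and fn: "fst c' \<in> nbrs V E (snd c')"
      using c' G by (auto simp: D_def in_dbonds nbrs_def simple_graph_def)
    have fnb: "finite (nbrs V E (snd c'))"
      using G by (auto simp: nbrs_def simple_graph_def)
    have "succ c' \<subseteq> (\<lambda>w. (snd c', w)) ` (nbrs V E (snd c') - {fst c'})"
      by (auto simp: succ_def D_def in_dbonds nbrs_def image_def)
    then have "card (succ c') \<le> card ((\<lambda>w. (snd c', w)) ` (nbrs V E (snd c') - {fst c'}))"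
      using fnb by (intro card_mono) auto
    also have "\<dots> \<le> card (nbrs V E (snd c') - {fst c'})" by (rule card_image_le) (use fnb in auto)
    also have "\<dots> = d - 1" using fn fnb R nV by (simp add: regular_def)
    finally show ?thesis .
  qed
  have "card (Fw D e (Suc n)) \<le> (\<Sum>c'\<in>Fw D e n. card (succ c'))"
    unfolding eq by (rule card_UN_le[OF fin])
  also have "\<dots> \<le> (\<Sum>c'\<in>Fw D e n. d - 1)"
    using Fw_sub[of e D n] e by (intro sum_mono cs) (auto simp: D_def)
  also have "\<dots> = card (Fw D e n) * (d - 1)" by simp
  also have "\<dots> \<le> (d - 1) ^ n * (d - 1)" using Suc.IH by (simp add: D_def)
  finally show ?case by (simp add: D_def mult.commute)
qed

lemma walk_Fw:
  assumes "\<forall>i\<le>n. p (j + i) \<in> D"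
    and "\<forall>i<n. snd (p (j + i)) = fst (p (Suc (j + i))) \<and> fst (p (j + i)) \<noteq> snd (p (Suc (j + i)))"
  shows "p (j + n) \<in> Fw D (p j) n"
  using assms
proof (induction n)
  case 0
  then show ?case by simp
next
  case (Suc n)
  then have "p (j + n) \<in> Fw D (p j) n" by auto
  then show ?case using Suc.prems(1)[rule_format, of "Suc n"] Suc.prems(2)[rule_format, of n]
    by auto
qed

lemma amp_walk:
  assumes G: "simple_graph V E"
    and Z: "\<forall>v\<in>V. \<forall>w\<in>nbrs V E v. \<sigma> v w w = 0"
    and p: "p \<in> W (dbonds V E) n b c" and a: "amp \<sigma> n p \<noteq> 0" and i: "i < n"
  shows "snd (p i) = fst (p (Suc i)) \<and> fst (p i) \<noteq> snd (p (Suc i))"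
proof -
  have nz: "Smat \<sigma> (p i) (p (Suc i)) \<noteq> 0"
    using a i by (auto simp: amp_def)
  then have 1: "snd (p i) = fst (p (Suc i))" by (auto simp: Smat_def split: if_splits)
  have piD: "p i \<in> dbonds V E" using p i by (auto simp: W_def PiE_def Pi_def)
  have "fst (p i) \<noteq> snd (p (Suc i))"
  proof
    assume eq: "fst (p i) = snd (p (Suc i))"
    have "snd (p i) \<in> V" "fst (p i) \<in> nbrs V E (snd (p i))"
      using piD G by (auto simp: in_dbonds nbrs_def simple_graph_def)
    then have "\<sigma> (snd (p i)) (fst (p i)) (fst (p i)) = 0" using Z by auto
    then show False using nz 1 eq by (simp add: Smat_def)
  qed
  with 1 show ?thesis by simp
qed

lemma two_walks_cycle:
  assumes G: "simple_graph V E"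
    and pW: "p \<in> W (dbonds V E) t b c" and qW: "q \<in> W (dbonds V E) t b c" and pq: "p \<noteq> q"
    and wp: "\<forall>i<t. snd (p i) = fst (p (Suc i)) \<and> fst (p i) \<noteq> snd (p (Suc i))"
    and wq: "\<forall>i<t. snd (q i) = fst (q (Suc i)) \<and> fst (q i) \<noteq> snd (q (Suc i))"
    and tT: "t \<le> T"
  shows "\<exists>j. 2 \<le> j \<and> j < t \<and> p j \<noteq> q j
    \<and> {fst (p j), snd (p j)} \<in> cycle_bonds V E (2*T) \<and> {fst (q j), snd (q j)} \<in> cycle_bonds V E (2*T)
    \<and> c \<in> Fw (dbonds V E) (p j) (t - j) \<and> c \<in> Fw (dbonds V E) (q j) (t - j)"
proof -
  define D where "D = dbonds V E"
  have pD: "\<And>i. i \<le> t \<Longrightarrow> p i \<in> D" and qD: "\<And>i. i \<le> t \<Longrightarrow> q i \<in> D"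
    using pW qW by (auto simp: W_def PiE_def Pi_def D_def)
  have pu: "\<And>i. t < i \<Longrightarrow> p i = undefined" and qu: "\<And>i. t < i \<Longrightarrow> q i = undefined"
    using pW qW by (auto simp: W_def PiE_def extensional_def)
  have p0: "p 0 = b" "p t = c" and q0: "q 0 = b" "q t = c" using pW qW by (auto simp: W_def)
  have inV: "\<And>x. x \<in> D \<Longrightarrow> fst x \<in> V \<and> snd x \<in> V \<and> E (fst x) (snd x)"
    by (auto simp: D_def in_dbonds)
  have Esym: "\<And>u w. E u w \<Longrightarrow> E w u" using G by (auto simp: simple_graph_def)
  obtain i0 where i0: "p i0 \<noteq> q i0" using pq by (auto simp: fun_eq_iff)
  then have i0t: "i0 \<le> t" using pu qu by (metis not_le)
  define Sj where "Sj = {i. i \<le> t \<and> p i \<noteq> q i}"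
  define j where "j = Max Sj"
  have fSj: "finite Sj" by (auto simp: Sj_def)
  have "i0 \<in> Sj" using i0 i0t by (simp add: Sj_def)
  then have jS: "j \<in> Sj" and jmax: "\<And>i. i \<in> Sj \<Longrightarrow> i \<le> j"
    using fSj by (auto simp: j_def intro: Max_in Max_ge)
  have jt: "j \<le> t" and pqj: "p j \<noteq> q j" using jS by (auto simp: Sj_def)
  have after: "\<And>i. j < i \<Longrightarrow> i \<le> t \<Longrightarrow> p i = q i"
    using jmax by (force simp: Sj_def)
  have jnt: "j < t" using jt pqj p0 q0 by (cases "j = t") auto
  have jn0: "j \<noteq> 0" using pqj p0 q0 by (cases j) auto
  define Sr where "Sr = {i. i < j \<and> p i = q i}"
  define r where "r = Max Sr"
  have fSr: "finite Sr" by (auto simp: Sr_def)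
  have "0 \<in> Sr" using jn0 p0 q0 by (simp add: Sr_def)
  then have rS: "r \<in> Sr" and rmax: "\<And>i. i \<in> Sr \<Longrightarrow> i \<le> r"
    using fSr by (auto simp: r_def intro: Max_in Max_ge)
  have rj: "r < j" and pqr: "p r = q r" using rS by (auto simp: Sr_def)
  have between: "\<And>i. r < i \<Longrightarrow> i \<le> j \<Longrightarrow> p i \<noteq> q i"
  proof -
    fix i assume "r < i" "i \<le> j"
    show "p i \<noteq> q i"
    proof (cases "i = j")
      case True then show ?thesis using pqj by simp
    next
      case False then show ?thesis using rmax[of i] \<open>r < i\<close> \<open>i \<le> j\<close> by (force simp: Sr_def)
    qed
  qed
  have sndj: "snd (p j) = snd (q j)"
    using wp[rule_format, of j] wq[rule_format, of j] after[of "Suc j"] jnt by auto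
  have fstr1: "fst (p (Suc r)) = fst (q (Suc r))"
    using wp[rule_format, of r] wq[rule_format, of r] pqr rj jnt by auto
  define m where "m = j - r"
  have m2: "2 \<le> m"
  proof (rule ccontr)
    assume "\<not> 2 \<le> m"
    then have "j = Suc r" using rj by (simp add: m_def)
    then have "p j = q j" using fstr1 sndj by (simp add: prod_eq_iff)
    then show False using pqj by simp
  qed
  have jrm: "j = r + m" using rj by (simp add: m_def)
  define y where "y i = (if i < m then fst (p (r + 1 + i)) else fst (q (r + 2*m + 1 - i)))" for i
  have Y1: "\<And>i. i < m \<Longrightarrow> y i = fst (p (r + 1 + i))" by (simp add: y_def)
  have Y2: "\<And>i. m \<le> i \<Longrightarrow> y i = fst (q (r + 2*m + 1 - i))" by (simp add: y_def)
  have Y1s: "\<And>i. 1 \<le> i \<Longrightarrow> i \<le> m \<Longrightarrow> y i = snd (p (r + i))"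
  proof -
    fix i assume i: "1 \<le> i" "i \<le> m"
    show "y i = snd (p (r + i))"
    proof (cases "i < m")
      case True
      then show ?thesis using Y1[OF True] wp[rule_format, of "r + i"] jrm jnt
        by (simp add: Suc_diff_le)
    next
      case False
      then have "i = m" using i by simp
      then show ?thesis using Y2[of m] sndj after[of "Suc j"] jnt jrm wq[rule_format, of j]
        by (simp add: Suc_diff_le add.commute)
    qed
  qed
  have Y2s: "\<And>i. m \<le> i \<Longrightarrow> i < 2*m \<Longrightarrow> y i = snd (q (r + 2*m - i))"
  proof -
    fix i assume i: "m \<le> i" "i < 2*m"
    have "r + 2*m + 1 - i = Suc (r + 2*m - i)" using i by simp
    moreover have "r + 2*m - i < t" using i jrm jnt by simp
    ultimately show "y i = snd (q (r + 2*m - i))"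
      using Y2[OF i(1)] wq[rule_format, of "r + 2*m - i"] by simp
  qed
  have y0: "y 0 = fst (p (Suc r))" using Y1[of 0] m2 by simp
  have yl: "y (2*m) = y 0" using Y2[of "2*m"] y0 fstr1 by simp
  have pqD: "\<And>i. i \<le> j \<Longrightarrow> p i \<in> D \<and> q i \<in> D" using pD qD jt by auto
  have yV: "\<And>i. i \<le> 2*m \<Longrightarrow> y i \<in> V"
  proof -
    fix i assume "i \<le> 2*m"
    show "y i \<in> V"
    proof (cases "i < m")
      case True then show ?thesis using Y1[OF True] inV pqD[of "r + 1 + i"] jrm by simp
    next
      case False then show ?thesis using Y2[of i] inV qD[of "r + 2*m + 1 - i"] jrm jnt by simp
    qed
  qed
  have yE: "\<And>i. i < 2*m \<Longrightarrow> E (y i) (y (Suc i))"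
  proof -
    fix i assume i: "i < 2*m"
    show "E (y i) (y (Suc i))"
    proof (cases "i < m")
      case True
      then show ?thesis using Y1[OF True] Y1s[of "Suc i"] inV pqD[of "r + 1 + i"] jrm by simp
    next
      case False
      then have "y i = snd (q (r + 2*m - i))" "y (Suc i) = fst (q (r + 2*m - i))"
        using Y2s[of i] Y2[of "Suc i"] i by auto
      moreover have "r + 2*m - i \<le> t" using False jrm jnt by simp
      ultimately show ?thesis using inV[OF qD[of "r + 2*m - i"]] Esym by auto
    qed
  qed
  have ynb: "y ((i + 2) mod (2*m)) \<noteq> y (i mod (2*m))" for i
  proof -
    define i' where "i' = i mod (2*m)"
    have i'l: "i' < 2*m" using m2 by (simp add: i'_def)
    have mod_eq: "(i + 2) mod (2*m) = (i' + 2) mod (2*m)" unfolding i'_def by (rule mod_add_left_eq[symmetric])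
    consider "i' + 2 < 2*m" | "i' = 2*m - 2" | "i' = 2*m - 1" using i'l by linarith
    then have "y ((i' + 2) mod (2*m)) \<noteq> y i'"
    proof cases
      case 1
      then have md: "(i' + 2) mod (2*m) = i' + 2" by simp
      consider "i' + 2 \<le> m" | "i' = m - 1" | "m \<le> i'" by linarith
      then show ?thesis
      proof cases
        case 1
        then have "y (i' + 2) = snd (p (r + (i' + 2)))" "y i' = fst (p (r + 1 + i'))"
          using Y1s[of "i' + 2"] Y1[of i'] by auto
        moreover have "fst (p (r + 1 + i')) \<noteq> snd (p (Suc (r + 1 + i')))"
          using wp[rule_format, of "r + 1 + i'"] 1 jrm jnt by simp
        ultimately show ?thesis using md by simp
      next
        case 2
        then have "y (i' + 2) = fst (q j)" "y i' = fst (p j)"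
          using Y2[of "i' + 2"] Y1[of i'] m2 jrm by (auto simp: add.commute)
        moreover have "fst (p j) \<noteq> fst (q j)" using pqj sndj by (auto simp: prod_eq_iff)
        ultimately show ?thesis using md by simp
      next
        case 3
        define s where "s = r + 2*m - i' - 1"
        have "y (i' + 2) = fst (q s)" "y i' = snd (q (Suc s))"
          using Y2[of "i' + 2"] Y2s[of i'] 3 1 by (auto simp: s_def Suc_diff_Suc)
        moreover have "fst (q s) \<noteq> snd (q (Suc s))"
          using wq[rule_format, of s] 3 1 jrm jnt by (simp add: s_def)
        ultimately show ?thesis using md by simp
      qed
    next
      case 2
      then have "i' + 2 = 2*m" using m2 by simp
      then have md: "(i' + 2) mod (2*m) = 0" by simp
      have "y i' = snd (q (r + 2))" using Y2s[of i'] 2 m2 by simp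
      moreover have "fst (q (Suc r)) \<noteq> snd (q (Suc (Suc r)))"
        using wq[rule_format, of "Suc r"] m2 jrm jnt by simp
      ultimately show ?thesis using md y0 fstr1 by simp
    next
      case 3
      then have "i' + 2 = 1 + 2*m" using m2 by simp
      moreover have "(1 + 2*m) mod (2*m) = 1 mod (2*m)" by (rule mod_add_self2)
      moreover have "1 mod (2*m) = (1::nat)" using m2 by (intro mod_less) simp
      ultimately have md: "(i' + 2) mod (2*m) = 1" by simp
      have "y i' = snd (q (Suc r))" using Y2s[of i'] 3 m2 by simp
      moreover have "y 1 = snd (p (Suc r))" using Y1s[of 1] m2 by simp
      moreover have "snd (p (Suc r)) \<noteq> snd (q (Suc r))"
        using between[of "Suc r"] fstr1 rj by (auto simp: prod_eq_iff)
      ultimately show ?thesis using md by simp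
    qed
    then show ?thesis using mod_eq i'_def by metis
  qed
  have cyc: "is_cycle V E (2*m) y"
    unfolding is_cycle_def using m2 yl yV yE ynb by auto
  have len: "2*m \<le> 2*T" using jrm jnt tT by simp
  have cp: "{fst (p j), snd (p j)} \<in> cycle_bonds V E (2*T)"
  proof -
    have "y (m - 1) = fst (p j)" "y (Suc (m - 1)) = snd (p j)"
      using Y1[of "m - 1"] Y1s[of m] m2 jrm by auto
    moreover have "m - 1 < 2*m" using m2 by simp
    moreover have "E (fst (p j)) (snd (p j))" using inV[OF pD[of j]] jt by simp
    ultimately have "E (fst (p j)) (snd (p j)) \<and> (\<exists>l pp. l \<le> 2*T \<and> is_cycle V E l pp \<and> (\<exists>i<l. {pp i, pp (Suc i)} = {fst (p j), snd (p j)}))"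
      using cyc len by metis
    then show ?thesis unfolding cycle_bonds_def by blast
  qed
  have cq: "{fst (q j), snd (q j)} \<in> cycle_bonds V E (2*T)"
  proof -
    have "y m = snd (q j)" "y (Suc m) = fst (q j)"
      using Y1s[of m] Y2[of "Suc m"] m2 jrm sndj by (auto simp: add.commute)
    then have "{y m, y (Suc m)} = {fst (q j), snd (q j)}" by auto
    moreover have "m < 2*m" using m2 by simp
    moreover have "E (fst (q j)) (snd (q j))" using inV[OF qD[of j]] jt by simp
    ultimately have "E (fst (q j)) (snd (q j)) \<and> (\<exists>l pp. l \<le> 2*T \<and> is_cycle V E l pp \<and> (\<exists>i<l. {pp i, pp (Suc i)} = {fst (q j), snd (q j)}))"
      using cyc len by metis
    then show ?thesis unfolding cycle_bonds_def by blast
  qed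
  have "p (j + (t - j)) \<in> Fw D (p j) (t - j)"
    by (rule walk_Fw) (use pD wp jnt in auto)
  moreover have "q (j + (t - j)) \<in> Fw D (q j) (t - j)"
    by (rule walk_Fw) (use qD wq jnt in auto)
  ultimately show ?thesis using jnt p0 q0 cp cq pqj m2 jrm
    by (intro exI[of _ j]) (auto simp: D_def)
qed



lemma geo_sum: "((x::real) - 1) * (\<Sum>i\<in>{1..n}. x ^ i) = x ^ Suc n - x"
  by (induction n) (simp_all add: algebra_simps)

lemma card_Dc:
  assumes fC: "finite Cb" and sub: "\<forall>S\<in>Cb. \<exists>u w. S = {u, w}"
  shows "card {e \<in> D. {fst e, snd e} \<in> Cb} \<le> 2 * card Cb"
proof -
  have fib: "card {e. {fst e, snd e} = S} \<le> 2 \<and> finite {e. {fst e, snd e} = S}" if "S \<in> Cb" for S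
  proof -
    from bspec[OF sub that] obtain u w where S: "S = {u, w}" by auto
    have sub2: "{e. {fst e, snd e} = S} \<subseteq> {(u, w), (w, u)}"
    proof
      fix e assume "e \<in> {e. {fst e, snd e} = S}"
      then have "{fst e, snd e} = {u, w}" by (simp add: S)
      then have "(fst e = u \<and> snd e = w) \<or> (fst e = w \<and> snd e = u)" by (simp add: doubleton_eq_iff)
      then show "e \<in> {(u, w), (w, u)}" by (cases e) auto
    qed
    have fin: "finite {e. {fst e, snd e} = S}" by (rule finite_subset[OF sub2]) simp
    have "card {e. {fst e, snd e} = S} \<le> card {(u, w), (w, u)}"
      by (rule card_mono) (simp, rule sub2)
    also have "\<dots> \<le> Suc (card {(w, u)})" by (rule card_insert_le_m1) auto
    also have "\<dots> = 2" by simp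
    finally show ?thesis using fin by simp
  qed
  have "card {e \<in> D. {fst e, snd e} \<in> Cb} \<le> card (\<Union>S\<in>Cb. {e. {fst e, snd e} = S})"
  proof (rule card_mono)
    show "finite (\<Union>S\<in>Cb. {e. {fst e, snd e} = S})"
      using fC fib by (intro finite_UN_I) auto
    show "{e \<in> D. {fst e, snd e} \<in> Cb} \<subseteq> (\<Union>S\<in>Cb. {e. {fst e, snd e} = S})" by auto
  qed
  also have "\<dots> \<le> (\<Sum>S\<in>Cb. card {e. {fst e, snd e} = S})" by (rule card_UN_le[OF fC])
  also have "\<dots> \<le> (\<Sum>S\<in>Cb. 2)" using fib by (intro sum_mono) auto
  finally show ?thesis by simp
qed

lemma sum_ind_card: "finite A \<Longrightarrow> (\<Sum>c\<in>A. if c \<in> F then 1 else 0) = card {c \<in> A. c \<in> F}"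
  by (simp add: sum.inter_filter[symmetric])

theorem proposition3:
  fixes V :: "'v set" and E :: "'v \<Rightarrow> 'v \<Rightarrow> bool" and d :: nat
    and L :: "'v \<times> 'v \<Rightarrow> real" and \<sigma> :: "'v \<Rightarrow> 'v \<Rightarrow> 'v \<Rightarrow> complex"
    and T :: nat and \<kappa> :: real and f :: "'v \<times> 'v \<Rightarrow> complex" and t :: nat
  assumes "simple_graph V E" and "regular V E d" and "d \<ge> 3"
    and "bond_lengths V E L"
    and "\<forall>v\<in>V. unitary_on (nbrs V E v) (\<sigma> v)"
    and "\<forall>v\<in>V. \<forall>w\<in>nbrs V E v. \<sigma> v w w = 0"
    and "T > 0" and "\<kappa> > 0"
    and "\<forall>b\<in>dbonds V E. cmod (f b) \<le> \<kappa>"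
    and "1 \<le> t" and "t \<le> T"
  shows "cmod (bond_inner (dbonds V E) f (\<lambda>b c. complex_of_real (Mtilde (dbonds V E) L \<sigma> t b c)) f
              - bond_inner (dbonds V E) f (\<lambda>b c. complex_of_real (mat_pow (dbonds V E) (Mmat \<sigma>) t b c)) f)
         \<le> 2 * \<kappa>\<^sup>2 / ((real d - 2) * (real d - 1)) * (real d - 1) ^ t
             * real (card (cycle_bonds V E (2 * T)))"
proof -
  note G = assms(1) and R = assms(2) and d3 = assms(3) and U = assms(5) and Z = assms(6)
  note kp = assms(8) and fk = assms(9) and t1 = assms(10) and tT = assms(11)
  define D where "D = dbonds V E"
  define Cb where "Cb = cycle_bonds V E (2 * T)"
  define Dc where "Dc = {e \<in> D. {fst e, snd e} \<in> Cb}"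
  define Gs where "Gs = {c \<in> D. \<exists>b\<in>D. \<exists>p\<in>W D t b c. \<exists>q\<in>W D t b c. p \<noteq> q \<and> amp \<sigma> t p \<noteq> 0 \<and> amp \<sigma> t q \<noteq> 0}"
  define Dm where "Dm b c = Mtilde D L \<sigma> t b c - mat_pow D (Mmat \<sigma>) t b c" for b c
  define S where "S = (\<Sum>i\<in>{1..t-2}. (d - 1) ^ i)"
  have fD: "finite D" using finite_dbonds[OF G] by (simp add: D_def)
  have fGs: "finite Gs" using fD by (auto simp: Gs_def)
  have fDc: "finite Dc" using fD by (auto simp: Dc_def)
  have eqL: "bond_inner D f (\<lambda>b c. complex_of_real (Mtilde D L \<sigma> t b c)) f
              - bond_inner D f (\<lambda>b c. complex_of_real (mat_pow D (Mmat \<sigma>) t b c)) f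
      = (\<Sum>b\<in>D. cnj (f b) * (\<Sum>c\<in>D. complex_of_real (Dm b c) * f c))"
    unfolding bond_inner_def Dm_def sum_subtractf[symmetric]
    by (intro sum.cong refl) (simp add: sum_subtractf right_diff_distrib left_diff_distrib)
  have boundA: "cmod (\<Sum>b\<in>D. cnj (f b) * (\<Sum>c\<in>D. complex_of_real (Dm b c) * f c))
      \<le> (\<Sum>b\<in>D. \<kappa> * (\<Sum>c\<in>D. \<bar>Dm b c\<bar> * \<kappa>))"
  proof -
    have "cmod (\<Sum>b\<in>D. cnj (f b) * (\<Sum>c\<in>D. complex_of_real (Dm b c) * f c))
        \<le> (\<Sum>b\<in>D. cmod (cnj (f b) * (\<Sum>c\<in>D. complex_of_real (Dm b c) * f c)))"
      by (rule norm_sum)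
    also have "\<dots> \<le> (\<Sum>b\<in>D. \<kappa> * (\<Sum>c\<in>D. \<bar>Dm b c\<bar> * \<kappa>))"
    proof (rule sum_mono)
      fix b assume b: "b \<in> D"
      have "cmod (\<Sum>c\<in>D. complex_of_real (Dm b c) * f c) \<le> (\<Sum>c\<in>D. cmod (complex_of_real (Dm b c) * f c))"
        by (rule norm_sum)
      also have "\<dots> \<le> (\<Sum>c\<in>D. \<bar>Dm b c\<bar> * \<kappa>)"
        using fk by (intro sum_mono) (auto simp: norm_mult D_def intro: mult_left_mono)
      finally have 1: "cmod (\<Sum>c\<in>D. complex_of_real (Dm b c) * f c) \<le> (\<Sum>c\<in>D. \<bar>Dm b c\<bar> * \<kappa>)" .
      show "cmod (cnj (f b) * (\<Sum>c\<in>D. complex_of_real (Dm b c) * f c)) \<le> \<kappa> * (\<Sum>c\<in>D. \<bar>Dm b c\<bar> * \<kappa>)"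
        unfolding norm_mult complex_mod_cnj
        using fk b 1 kp by (intro mult_mono) (auto simp: D_def)
    qed
    finally show ?thesis .
  qed
  have eqB: "(\<Sum>b\<in>D. \<kappa> * (\<Sum>c\<in>D. \<bar>Dm b c\<bar> * \<kappa>)) = \<kappa>\<^sup>2 * (\<Sum>c\<in>D. \<Sum>b\<in>D. \<bar>Dm b c\<bar>)"
  proof -
    have "(\<Sum>b\<in>D. \<kappa> * (\<Sum>c\<in>D. \<bar>Dm b c\<bar> * \<kappa>)) = \<kappa>\<^sup>2 * (\<Sum>b\<in>D. \<Sum>c\<in>D. \<bar>Dm b c\<bar>)"
      by (simp add: sum_distrib_left sum_distrib_right power2_eq_square mult_ac)
    also have "(\<Sum>b\<in>D. \<Sum>c\<in>D. \<bar>Dm b c\<bar>) = (\<Sum>c\<in>D. \<Sum>b\<in>D. \<bar>Dm b c\<bar>)"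
      by (rule sum.swap)
    finally show ?thesis .
  qed
  have colbound: "(\<Sum>b\<in>D. \<bar>Dm b c\<bar>) \<le> (if c \<in> Gs then 2 else 0)" if c: "c \<in> D" for c
  proof (cases "c \<in> Gs")
    case False
    have "Dm b c = 0" if b: "b \<in> D" for b
    proof -
      have "\<forall>p\<in>W D t b c. \<forall>q\<in>W D t b c. p \<noteq> q \<longrightarrow> amp \<sigma> t p = 0 \<or> amp \<sigma> t q = 0"
        using False b c by (auto simp: Gs_def)
      from good_col[OF fD b c this] show ?thesis by (simp add: Dm_def)
    qed
    then show ?thesis using False by simp
  next
    case True
    have "(\<Sum>b\<in>D. \<bar>Dm b c\<bar>) \<le> (\<Sum>b\<in>D. Mtilde D L \<sigma> t b c + mat_pow D (Mmat \<sigma>) t b c)"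
    proof (rule sum_mono)
      fix b assume b: "b \<in> D"
      have "0 \<le> Mtilde D L \<sigma> t b c" by (rule Mtilde_nonneg[OF fD b c])
      moreover have "0 \<le> mat_pow D (Mmat \<sigma>) t b c" by (rule Mpow_nonneg)
      ultimately show "\<bar>Dm b c\<bar> \<le> Mtilde D L \<sigma> t b c + mat_pow D (Mmat \<sigma>) t b c"
        unfolding Dm_def by linarith
    qed
    also have "\<dots> = 2"
      using Mtilde_colsum[OF G U, of c L t] Mpow_colsum[OF G U, of c t] c
      by (simp add: sum.distrib D_def)
    finally show ?thesis using True by simp
  qed
  have boundC: "(\<Sum>c\<in>D. \<Sum>b\<in>D. \<bar>Dm b c\<bar>) \<le> 2 * real (card Gs)"
  proof -
    have "(\<Sum>c\<in>D. \<Sum>b\<in>D. \<bar>Dm b c\<bar>) \<le> (\<Sum>c\<in>D. if c \<in> Gs then 2 else 0)"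
      by (rule sum_mono) (rule colbound)
    also have "\<dots> = (\<Sum>c\<in>{c \<in> D. c \<in> Gs}. 2)"
      by (rule sum.inter_filter[OF fD, symmetric])
    also have "{c \<in> D. c \<in> Gs} = Gs" by (auto simp: Gs_def)
    finally show ?thesis by simp
  qed
  have key: "2 \<le> (\<Sum>i\<in>{1..t-2}. \<Sum>e\<in>Dc. if c \<in> Fw D e i then 1 else (0::nat))" if c: "c \<in> Gs" for c
  proof -
    obtain b p q where b: "b \<in> D" and cD: "c \<in> D" and pW: "p \<in> W D t b c" and qW: "q \<in> W D t b c"
      and pq: "p \<noteq> q" and ap: "amp \<sigma> t p \<noteq> 0" and aq: "amp \<sigma> t q \<noteq> 0"
      using c by (auto simp: Gs_def)
    have wp: "\<forall>i<t. snd (p i) = fst (p (Suc i)) \<and> fst (p i) \<noteq> snd (p (Suc i))"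
      using amp_walk[OF G Z pW[unfolded D_def] ap] by blast
    have wq: "\<forall>i<t. snd (q i) = fst (q (Suc i)) \<and> fst (q i) \<noteq> snd (q (Suc i))"
      using amp_walk[OF G Z qW[unfolded D_def] aq] by blast
    obtain j where j2: "2 \<le> j" and jt: "j < t" and pqj: "p j \<noteq> q j"
      and cp: "{fst (p j), snd (p j)} \<in> Cb" and cq: "{fst (q j), snd (q j)} \<in> Cb"
      and Fp: "c \<in> Fw D (p j) (t - j)" and Fq: "c \<in> Fw D (q j) (t - j)"
      using two_walks_cycle[OF G pW[unfolded D_def] qW[unfolded D_def] pq wp wq tT]
      by (auto simp: Cb_def D_def)
    have pjD: "p j \<in> D" "q j \<in> D" using pW qW jt by (auto simp: W_def PiE_def Pi_def)
    have e12: "{p j, q j} \<subseteq> Dc" using pjD cp cq by (auto simp: Dc_def)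
    have i0: "t - j \<in> {1..t-2}" using j2 jt by auto
    have "2 = (\<Sum>e\<in>{p j, q j}. if c \<in> Fw D e (t - j) then 1 else (0::nat))"
      using pqj Fp Fq by simp
    also have "\<dots> \<le> (\<Sum>e\<in>Dc. if c \<in> Fw D e (t - j) then 1 else (0::nat))"
      by (rule sum_mono2[OF fDc e12]) auto
    also have "\<dots> \<le> (\<Sum>i\<in>{1..t-2}. \<Sum>e\<in>Dc. if c \<in> Fw D e i then 1 else (0::nat))"
      by (rule member_le_sum[OF i0]) auto
    finally show ?thesis .
  qed
  have fCb: "finite Cb"
  proof -
    have "Cb \<subseteq> (\<lambda>x. {fst x, snd x}) ` D"
    proof
      fix S assume "S \<in> Cb"
      then obtain u w where S: "S = {u, w}" and Euw: "E u w" by (auto simp: Cb_def cycle_bonds_def)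
      have "(u, w) \<in> D" using G Euw by (auto simp: D_def dbonds_def simple_graph_def)
      then show "S \<in> (\<lambda>x. {fst x, snd x}) ` D" unfolding S by force
    qed
    then show ?thesis using fD finite_surj by blast
  qed
  have subCb: "\<forall>S\<in>Cb. \<exists>u w. S = {u, w}" by (auto simp: Cb_def cycle_bonds_def)
  have cDc: "card Dc \<le> 2 * card Cb" unfolding Dc_def by (rule card_Dc[OF fCb subCb])
  have "2 * card Gs = (\<Sum>c\<in>Gs. 2)" by simp
  also have "\<dots> \<le> (\<Sum>c\<in>Gs. \<Sum>i\<in>{1..t-2}. \<Sum>e\<in>Dc. if c \<in> Fw D e i then 1 else (0::nat))"
    by (rule sum_mono) (rule key)
  also have "\<dots> = (\<Sum>i\<in>{1..t-2}. \<Sum>c\<in>Gs. \<Sum>e\<in>Dc. if c \<in> Fw D e i then 1 else (0::nat))"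
    by (rule sum.swap)
  also have "\<dots> = (\<Sum>i\<in>{1..t-2}. \<Sum>e\<in>Dc. \<Sum>c\<in>Gs. if c \<in> Fw D e i then 1 else (0::nat))"
    by (intro sum.cong refl sum.swap)
  also have "\<dots> \<le> (\<Sum>i\<in>{1..t-2}. \<Sum>e\<in>Dc. (d - 1) ^ i)"
  proof (intro sum_mono)
    fix i e assume e: "e \<in> Dc"
    then have eD: "e \<in> D" by (simp add: Dc_def)
    have "(\<Sum>c\<in>Gs. if c \<in> Fw D e i then 1 else (0::nat)) = card {c \<in> Gs. c \<in> Fw D e i}"
      by (rule sum_ind_card[OF fGs])
    also have "\<dots> \<le> card (Fw D e i)"
      using Fw_sub[OF eD, of i] fD by (intro card_mono) (auto intro: finite_subset)
    also have "\<dots> \<le> (d - 1) ^ i" using Fw_card[OF G R eD[unfolded D_def]] by (simp add: D_def)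
    finally show "(\<Sum>c\<in>Gs. if c \<in> Fw D e i then 1 else (0::nat)) \<le> (d - 1) ^ i" .
  qed
  also have "\<dots> = card Dc * S" by (simp add: S_def sum_distrib_left)
  also have "\<dots> \<le> 2 * card Cb * S" using cDc by simp
  finally have cardG: "card Gs \<le> card Cb * S" by simp
  define x where "x = real d - 1"
  have x2: "2 \<le> x" using d3 by (simp add: x_def)
  have Sreal: "real S = (\<Sum>i\<in>{1..t-2}. x ^ i)"
    using d3 by (simp add: S_def x_def of_nat_diff)
  have geo: "(x - 1) * real S \<le> x ^ (t - 1)"
  proof (cases "t \<ge> 2")
    case True
    have "(x - 1) * real S = x ^ Suc (t - 2) - x" unfolding Sreal by (rule geo_sum)
    also have "Suc (t - 2) = t - 1" using True by simp
    finally show ?thesis using x2 by simp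
  next
    case False
    then have "t - 2 = 0" by simp
    then have "S = 0" by (simp add: S_def)
    then show ?thesis using x2 by simp
  qed
  have SB: "real S \<le> x ^ (t - 1) / (x - 1)" using geo x2 by (simp add: field_simps)
  have LHS: "cmod (bond_inner D f (\<lambda>b c. complex_of_real (Mtilde D L \<sigma> t b c)) f
              - bond_inner D f (\<lambda>b c. complex_of_real (mat_pow D (Mmat \<sigma>) t b c)) f)
      \<le> \<kappa>\<^sup>2 * (2 * real (card Gs))"
  proof -
    have "\<kappa>\<^sup>2 * (\<Sum>c\<in>D. \<Sum>b\<in>D. \<bar>Dm b c\<bar>) \<le> \<kappa>\<^sup>2 * (2 * real (card Gs))"
      using boundC by (intro mult_left_mono) auto
    then show ?thesis unfolding eqL using boundA eqB by linarith
  qed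
  also have "\<dots> \<le> \<kappa>\<^sup>2 * (2 * (real (card Cb) * real S))"
    using cardG by (intro mult_left_mono) (auto simp flip: of_nat_mult)
  also have "\<dots> \<le> \<kappa>\<^sup>2 * (2 * (real (card Cb) * (x ^ (t - 1) / (x - 1))))"
    using SB by (intro mult_left_mono) auto
  also have "\<dots> = 2 * \<kappa>\<^sup>2 / ((real d - 2) * (real d - 1)) * (real d - 1) ^ t * real (card Cb)"
  proof -
    have xt: "(real d - 1) ^ t = x ^ (t - 1) * x" using t1 by (simp add: x_def power_Suc2[symmetric])
    have d2: "real d - 2 = x - 1" by (simp add: x_def)
    have d1: "real d - 1 = x" by (simp add: x_def)
    define y where "y = x ^ (t - 1)"
    have "x \<noteq> 0" "x - 1 \<noteq> 0" using x2 by auto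
    moreover have xt': "x ^ t = y * x" using xt by (simp add: x_def y_def)
    ultimately show ?thesis unfolding d2 d1 xt' y_def[symmetric] by (simp add: field_simps)
  qed
  finally show ?thesis by (simp add: D_def Cb_def)
qed


end
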